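(* Let $(x_j)_{j=1}^\infty$ be a Riesz basis for a real infinite dimensional Hilbert space $H$, and let $x\in H$. Then $(x_j)_{j=1}^\infty$ does stable phase retrieval near $x$ if and only if $\langle x,x_j\rangle=0$ for all but finitely many $j\in\mathbb N$.
   Context: The analysis operator of $(x_j)_{j=1}^\infty$ is $\Theta(x)=(\langle x,x_j\rangle)_{j=1}^\infty\in\ell_2$ and $|\Theta x|=(|\langle x,x_j\rangle|)_j$. For $x,y$ with $x\neq\pm y$, set $\Psi(x,y)=\||\Theta x|-|\Theta y|\|/\min_{\lambda=\pm1}\|x-\lambda y\|$. For $C>0$, the family does $C$-stable phase retrieval near $x$ if $\liminf_{y\to x,\ y\neq\pm x} C\,\Psi(x,y)\ge1$, and does stable phase retrieval near $x$ if this holds for some $C>0$. *)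

theory Defs
  imports "HOL-Analysis.Analysis"
begin

text \<open>Real Hilbert spaces are modelled by types of class real_inner + complete_space.\<close>

definition infinite_dimensional :: "'a::real_vector itself \<Rightarrow> bool" where
  "infinite_dimensional _ \<longleftrightarrow> \<not> (\<exists>S::'a set. finite S \<and> span S = UNIV)"

definition orthonormal_basis :: "(nat \<Rightarrow> 'a::real_inner) \<Rightarrow> bool" where
  "orthonormal_basis e \<longleftrightarrow>
     (\<forall>i j. e i \<bullet> e j = (if i = j then 1 else 0)) \<and> closure (span (range e)) = UNIV"

definition riesz_basis :: "(nat \<Rightarrow> 'a::{real_inner,complete_space}) \<Rightarrow> bool" where
  "riesz_basis xs \<longleftrightarrow>
     (\<exists>(e::nat \<Rightarrow> 'a) (T::'a \<Rightarrow> 'a). orthonormal_basis e \<and> bounded_linear T \<and> bij T \<and> (\<forall>j. T (e j) = xs j))"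

definition abs_analysis_dist :: "(nat \<Rightarrow> 'a::real_inner) \<Rightarrow> 'a \<Rightarrow> 'a \<Rightarrow> real" where
  "abs_analysis_dist xs x y = sqrt (\<Sum>j. (\<bar>x \<bullet> xs j\<bar> - \<bar>y \<bullet> xs j\<bar>)\<^sup>2)"

definition Psi :: "(nat \<Rightarrow> 'a::real_inner) \<Rightarrow> 'a \<Rightarrow> 'a \<Rightarrow> real" where
  "Psi xs x y = abs_analysis_dist xs x y / min (norm (x - y)) (norm (x + y))"

definition C_stable_pr_near :: "real \<Rightarrow> (nat \<Rightarrow> 'a::real_inner) \<Rightarrow> 'a \<Rightarrow> bool" where
  "C_stable_pr_near C xs x \<longleftrightarrow>
     Liminf (at x within - {x, - x}) (\<lambda>y. ereal (C * Psi xs x y)) \<ge> 1"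

definition stable_pr_near :: "(nat \<Rightarrow> 'a::real_inner) \<Rightarrow> 'a \<Rightarrow> bool" where
  "stable_pr_near xs x \<longleftrightarrow> (\<exists>C>0. C_stable_pr_near C xs x)"

end

theory Submission
  imports Defs
begin


lemma on_inner: "orthonormal_basis e \<Longrightarrow> e i \<bullet> e j = (if i = j then 1 else 0)"
  unfolding orthonormal_basis_def by blast

lemma on_dense: "orthonormal_basis e \<Longrightarrow> closure (span (range e)) = UNIV"
  unfolding orthonormal_basis_def by blast

lemma on_sum_inner:
  assumes "orthonormal_basis e" "finite I"
  shows "(\<Sum>i\<in>I. c i *\<^sub>R e i) \<bullet> e j = (if j \<in> I then c j else 0)"
proof -
  have "(\<Sum>i\<in>I. c i *\<^sub>R e i) \<bullet> e j = (\<Sum>i\<in>I. c i * (if i = j then 1 else 0))"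
    by (simp add: inner_sum_left on_inner[OF assms(1)])
  also have "\<dots> = (\<Sum>i\<in>I. if i = j then c i else 0)"
    by (rule sum.cong) auto
  also have "\<dots> = (if j \<in> I then c j else 0)"
    using assms(2) by (simp add: sum.delta)
  finally show ?thesis .
qed

lemma on_sum_norm2:
  assumes "orthonormal_basis e" "finite I"
  shows "(norm (\<Sum>i\<in>I. c i *\<^sub>R e i))\<^sup>2 = (\<Sum>i\<in>I. (c i)\<^sup>2)"
proof -
  have "(norm (\<Sum>i\<in>I. c i *\<^sub>R e i))\<^sup>2 = (\<Sum>i\<in>I. c i *\<^sub>R e i) \<bullet> (\<Sum>i\<in>I. c i *\<^sub>R e i)"
    by (simp add: power2_norm_eq_inner)
  also have "\<dots> = (\<Sum>j\<in>I. c j * ((\<Sum>i\<in>I. c i *\<^sub>R e i) \<bullet> e j))"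
    by (simp only: inner_sum_right inner_scaleR_right)
  also have "\<dots> = (\<Sum>j\<in>I. (c j)\<^sup>2)"
    by (rule sum.cong) (auto simp: on_sum_inner[OF assms] power2_eq_square)
  finally show ?thesis .
qed

lemma orth_span:
  assumes "x \<in> span S" "\<And>v. v \<in> S \<Longrightarrow> v \<bullet> u = 0"
  shows "x \<bullet> u = 0"
  using assms(1)
proof (induction rule: span_induct_alt)
  case base then show ?case by simp
next
  case (step c x y) then show ?case using assms(2) by (simp add: inner_add_left)
qed

definition projP :: "(nat \<Rightarrow> 'a::real_inner) \<Rightarrow> nat \<Rightarrow> 'a \<Rightarrow> 'a" where
  "projP e n z = (\<Sum>i<n. (z \<bullet> e i) *\<^sub>R e i)"

lemma P_orth:
  assumes "orthonormal_basis e" "j < n"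
  shows "(z - projP e n z) \<bullet> e j = 0"
  using assms on_sum_inner[OF assms(1), of "{..<n}" "\<lambda>i. z \<bullet> e i" j] by (simp add: projP_def inner_diff_left)

lemma P_best:
  assumes "orthonormal_basis e" "w \<in> span (e ` {..<n})"
  shows "norm (z - projP e n z) \<le> norm (z - w)"
proof -
  have pin: "projP e n z \<in> span (e ` {..<n})"
    unfolding projP_def by (intro span_sum span_scale span_base) auto
  have d: "projP e n z - w \<in> span (e ` {..<n})" using pin assms(2) by (rule span_diff)
  have o: "(projP e n z - w) \<bullet> (z - projP e n z) = 0"
  proof (rule orth_span[OF d])
    fix v assume "v \<in> e ` {..<n}"
    then obtain i where "i < n" "v = e i" by auto
    then show "v \<bullet> (z - projP e n z) = 0" using P_orth[OF assms(1), of i n z] by (simp add: inner_commute orthogonal_def)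
  qed
  have "z - w = (z - projP e n z) + (projP e n z - w)" by simp
  then have "(norm (z - w))\<^sup>2 = (norm (z - projP e n z))\<^sup>2 + (norm (projP e n z - w))\<^sup>2"
    using o norm_add_Pythagorean[of "z - projP e n z" "projP e n z - w"] by (simp add: inner_commute orthogonal_def)
  then have "(norm (z - projP e n z))\<^sup>2 \<le> (norm (z - w))\<^sup>2" by simp
  then show ?thesis by (simp add: power2_le_iff_abs_le)
qed

lemma span_range_finite:
  fixes e :: "nat \<Rightarrow> 'a::real_vector"
  assumes "w \<in> span (range e)"
  shows "\<exists>N. w \<in> span (e ` {..<N})"
proof -
  obtain t r where t: "w = (\<Sum>a\<in>t. r a *\<^sub>R a)" "finite t" "t \<subseteq> range e"
    using assms unfolding span_explicit by blast
  then obtain I where I: "finite I" "t = e ` I" using finite_subset_image[of t e UNIV] by blast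
  obtain N where "I \<subseteq> {..<N}" using finite_nat_bounded[OF I(1)] by blast
  then have "t \<subseteq> e ` {..<N}" using I by auto
  then have "w \<in> span (e ` {..<N})"
    unfolding t(1) by (intro span_sum span_scale span_base) auto
  then show ?thesis by blast
qed

lemma P_tendsto:
  assumes "orthonormal_basis e"
  shows "(\<lambda>n. projP e n z) \<longlonglongrightarrow> z"
proof (rule LIMSEQ_I)
  fix r :: real assume "r > 0"
  have "z \<in> closure (span (range e))" using on_dense[OF assms] by simp
  then obtain w where w: "w \<in> span (range e)" "dist w z < r"
    using \<open>r > 0\<close> closure_approachable by blast
  obtain N where N: "w \<in> span (e ` {..<N})" using span_range_finite[OF w(1)] by blast
  show "\<exists>no. \<forall>n\<ge>no. norm (projP e n z - z) < r"
  proof (intro exI allI impI)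
    fix n assume "n \<ge> N"
    then have "e ` {..<N} \<subseteq> e ` {..<n}" by auto
    then have "w \<in> span (e ` {..<n})" using N span_mono by blast
    then have "norm (z - projP e n z) \<le> norm (z - w)" by (rule P_best[OF assms])
    then show "norm (projP e n z - z) < r" using w(2) by (simp add: dist_norm norm_minus_commute)
  qed
qed

lemma expansion:
  assumes "orthonormal_basis e"
  shows "(\<lambda>i. (z \<bullet> e i) *\<^sub>R e i) sums z"
  using P_tendsto[OF assms] unfolding sums_def projP_def .

lemma parseval:
  assumes "orthonormal_basis e"
  shows "(\<lambda>i. (z \<bullet> e i)\<^sup>2) sums (norm z)\<^sup>2"
proof -
  have "(\<lambda>n. (norm (projP e n z))\<^sup>2) \<longlonglongrightarrow> (norm z)\<^sup>2"
    by (intro tendsto_intros P_tendsto[OF assms])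
  moreover have "(norm (projP e n z))\<^sup>2 = (\<Sum>i<n. (z \<bullet> e i)\<^sup>2)" for n
    unfolding projP_def by (rule on_sum_norm2[OF assms]) simp
  ultimately show ?thesis unfolding sums_def by simp
qed



lemma summable_Cauchy_c:
  fixes f :: "nat \<Rightarrow> 'a::{real_normed_vector,complete_space}"
  assumes r: "\<forall>e>0. \<exists>N. \<forall>m\<ge>N. \<forall>n. norm (sum f {m..<n}) < e"
  shows "summable f"
    unfolding summable_iff_convergent Cauchy_convergent_iff [symmetric] Cauchy_iff
  proof clarify
    fix e :: real
    assume "0 < e"
    with r obtain N where N: "\<And>m n. m \<ge> N \<Longrightarrow> norm (sum f {m..<n}) < e"
      by blast
    have "norm (sum f {..<m} - sum f {..<n}) < e" if "m\<ge>N" "n\<ge>N" for m n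
    proof (cases m n rule: linorder_class.le_cases)
      assume "m \<le> n"
      then show ?thesis
        by (metis N finite_lessThan lessThan_minus_lessThan lessThan_subset_iff norm_minus_commute sum_diff \<open>m\<ge>N\<close>)
    next
      assume "n \<le> m"
      then show ?thesis
        by (metis N finite_lessThan lessThan_minus_lessThan lessThan_subset_iff sum_diff \<open>n\<ge>N\<close>)
    qed
    then show "\<exists>M. \<forall>m\<ge>M. \<forall>n\<ge>M. norm (sum f {..<m} - sum f {..<n}) < e"
      by blast
  qed

lemma on_series_summable:
  fixes e :: "nat \<Rightarrow> 'a::{real_inner,complete_space}"
  assumes "orthonormal_basis e" "summable (\<lambda>i. (c i)\<^sup>2)"
  shows "summable (\<lambda>i. c i *\<^sub>R e i)"
proof (rule summable_Cauchy_c, intro allI impI)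
  fix r :: real assume "r > 0"
  then have "r\<^sup>2 > 0" by simp
  with assms(2) obtain N where N: "\<forall>m\<ge>N. \<forall>n. norm (sum (\<lambda>i. (c i)\<^sup>2) {m..<n}) < r\<^sup>2"
    unfolding summable_Cauchy by blast
  show "\<exists>N. \<forall>m\<ge>N. \<forall>n. norm (\<Sum>i = m..<n. c i *\<^sub>R e i) < r"
  proof (intro exI allI impI)
    fix m n assume "m \<ge> N"
    have "(norm (\<Sum>i = m..<n. c i *\<^sub>R e i))\<^sup>2 = (\<Sum>i = m..<n. (c i)\<^sup>2)"
      by (rule on_sum_norm2[OF assms(1)]) simp
    also have "\<dots> < r\<^sup>2"
    proof -
      have "norm (\<Sum>i = m..<n. (c i)\<^sup>2) < r\<^sup>2" using N \<open>m \<ge> N\<close> by blast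
      moreover have "(\<Sum>i = m..<n. (c i)\<^sup>2) \<ge> 0" by (simp add: sum_nonneg)
      ultimately show ?thesis by simp
    qed
    finally show "norm (\<Sum>i = m..<n. c i *\<^sub>R e i) < r"
      by (rule power2_less_imp_less) (use \<open>r > 0\<close> in simp)
  qed
qed

lemma on_series_coeff:
  fixes e :: "nat \<Rightarrow> 'a::{real_inner,complete_space}"
  assumes "orthonormal_basis e" "summable (\<lambda>i. (c i)\<^sup>2)"
  shows "(\<Sum>i. c i *\<^sub>R e i) \<bullet> e j = c j"
proof -
  have "(\<lambda>i. (c i *\<^sub>R e i) \<bullet> e j) sums ((\<Sum>i. c i *\<^sub>R e i) \<bullet> e j)"
    using bounded_linear.sums[OF bounded_linear_inner_left summable_sums[OF on_series_summable[OF assms]]] .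
  moreover have "(\<lambda>i. (c i *\<^sub>R e i) \<bullet> e j) = (\<lambda>i. if i = j then c i else 0)"
    by (auto simp: on_inner[OF assms(1)])
  ultimately show ?thesis using sums_single[of j c] sums_unique2 by metis
qed

lemma adjoint_exists:
  fixes L :: "'a::{real_inner,complete_space} \<Rightarrow> 'a" and e :: "nat \<Rightarrow> 'a"
  assumes e: "orthonormal_basis e" and L: "bounded_linear L" and K: "\<And>u. norm (L u) \<le> K * norm u" "K > 0"
  shows "\<exists>A. \<forall>v. (\<forall>w. A v \<bullet> w = v \<bullet> L w) \<and> norm (A v) \<le> K * norm v"
proof -
  have lin: "linear L" using L bounded_linear.linear by blast
  define c where "c v i = v \<bullet> L (e i)" for v i
  have bnd: "(\<Sum>i<n. (c v i)\<^sup>2) \<le> (K * norm v)\<^sup>2" for v n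
  proof -
    define s where "s = (\<Sum>i<n. (c v i)\<^sup>2)"
    define u where "u = (\<Sum>i<n. c v i *\<^sub>R e i)"
    have s0: "s \<ge> 0" unfolding s_def by (simp add: sum_nonneg)
    have nu: "norm u = sqrt s"
      using on_sum_norm2[OF e, of "{..<n}" "c v"] unfolding u_def s_def
      by (metis finite_lessThan norm_ge_zero real_sqrt_unique)
    have "v \<bullet> L u = (\<Sum>i<n. c v i * (v \<bullet> L (e i)))"
      unfolding u_def by (simp add: linear_sum[OF lin] linear_scale[OF lin] inner_sum_right)
    then have "s = v \<bullet> L u" unfolding s_def c_def by (simp add: power2_eq_square)
    also have "\<dots> \<le> norm v * norm (L u)" by (rule norm_cauchy_schwarz)
    also have "\<dots> \<le> norm v * (K * sqrt s)" using K(1)[of u] nu by (simp add: mult_left_mono)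
    finally have *: "sqrt s * sqrt s \<le> (K * norm v) * sqrt s" using s0 by (simp add: algebra_simps)
    have "sqrt s \<le> K * norm v"
    proof (cases "sqrt s = 0")
      case True then show ?thesis using K(2) by simp
    next
      case False then have "sqrt s > 0" using s0 by simp
      then show ?thesis using * by (rule mult_right_le_imp_le[rotated])
    qed
    then have "(sqrt s)\<^sup>2 \<le> (K * norm v)\<^sup>2" by (rule power_mono) (simp add: s0)
    then show ?thesis using s0 unfolding s_def by simp
  qed
  have summ: "summable (\<lambda>i. (c v i)\<^sup>2)" for v
    by (rule summableI_nonneg_bounded[OF _ bnd]) simp
  define A where "A v = (\<Sum>i. c v i *\<^sub>R e i)" for v
  have coeff: "A v \<bullet> e i = c v i" for v i
    unfolding A_def by (rule on_series_coeff[OF e summ])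
  have adj: "A v \<bullet> w = v \<bullet> L w" for v w
  proof -
    have ex: "(\<lambda>i. (w \<bullet> e i) *\<^sub>R e i) sums w" by (rule expansion[OF e])
    have "(\<lambda>i. L ((w \<bullet> e i) *\<^sub>R e i)) sums L w" by (rule bounded_linear.sums[OF L ex])
    then have "(\<lambda>i. v \<bullet> L ((w \<bullet> e i) *\<^sub>R e i)) sums (v \<bullet> L w)"
      by (rule bounded_linear.sums[OF bounded_linear_inner_right])
    then have 1: "(\<lambda>i. (w \<bullet> e i) * c v i) sums (v \<bullet> L w)"
      by (simp add: linear_scale[OF lin] c_def)
    have "(\<lambda>i. A v \<bullet> ((w \<bullet> e i) *\<^sub>R e i)) sums (A v \<bullet> w)"
      by (rule bounded_linear.sums[OF bounded_linear_inner_right ex])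
    then have 2: "(\<lambda>i. (w \<bullet> e i) * c v i) sums (A v \<bullet> w)"
      by (simp add: coeff)
    show ?thesis using 1 2 sums_unique2 by blast
  qed
  have nrm: "norm (A v) \<le> K * norm v" for v
  proof -
    have "(\<lambda>i. (c v i)\<^sup>2) sums (norm (A v))\<^sup>2"
      using parseval[OF e, of "A v"] by (simp add: coeff)
    then have "(norm (A v))\<^sup>2 = (\<Sum>i. (c v i)\<^sup>2)" by (simp add: sums_iff)
    also have "\<dots> \<le> (K * norm v)\<^sup>2" by (rule suminf_le_const[OF summ bnd])
    finally show ?thesis by (rule power2_le_imp_le) (use K(2) in simp)
  qed
  show ?thesis using adj nrm by blast
qed



lemma summable_norm_c:
  fixes f :: "nat \<Rightarrow> 'a::{real_normed_vector,complete_space}"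
  assumes "summable (\<lambda>n. norm (f n))"
  shows "summable f"
proof (rule summable_Cauchy_c, intro allI impI)
  fix e :: real assume "e > 0"
  then obtain N where N: "\<forall>m\<ge>N. \<forall>n. norm (sum (\<lambda>n. norm (f n)) {m..<n}) < e"
    using assms unfolding summable_Cauchy by blast
  show "\<exists>N. \<forall>m\<ge>N. \<forall>n. norm (sum f {m..<n}) < e"
  proof (intro exI allI impI)
    fix m n assume "m \<ge> N"
    have "norm (sum f {m..<n}) \<le> sum (\<lambda>n. norm (f n)) {m..<n}" by (rule norm_sum)
    also have "\<dots> = norm (sum (\<lambda>n. norm (f n)) {m..<n})" by (simp add: sum_nonneg)
    also have "\<dots> < e" using N \<open>m \<ge> N\<close> by blast
    finally show "norm (sum f {m..<n}) < e" .
  qed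
qed

lemma geom_half_sum: "(\<Sum>k<n. (1/2::real)^k) = 2 - 2 * (1/2)^n"
  by (induction n) (auto simp: field_simps)

lemma baire_step:
  fixes T :: "'a::{real_normed_vector,complete_space} \<Rightarrow> 'a"
  assumes "bij T"
  shows "\<exists>n::nat. interior (closure (T ` ball 0 (real n))) \<noteq> {}"
proof (rule ccontr)
  assume "\<not> ?thesis"
  then have emp: "\<And>n::nat. interior (closure (T ` ball 0 (real n))) = {}" by blast
  let ?G = "range (\<lambda>n::nat. closure (T ` ball 0 (real n)))"
  have "euclidean interior_of \<Union>?G = {}"
  proof (rule Baire_category_alt)
    show "completely_metrizable_space (euclidean::'a topology) \<or> locally_compact_space (euclidean::'a topology) \<and> regular_space euclidean"
      using completely_metrizable_space_euclidean by blast
    show "countable ?G" by simp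
    fix S assume "S \<in> ?G"
    then obtain k where S: "S = closure (T ` ball 0 (real k))" by blast
    have "closedin euclidean S" unfolding S closed_closedin[symmetric] by (rule closed_closure)
    moreover have "euclidean interior_of S = {}" unfolding S euclidean_interior_of by (rule emp)
    ultimately show "closedin euclidean S \<and> euclidean interior_of S = {}" by blast
  qed
  moreover have "\<Union>?G = UNIV"
  proof -
    have wG: "w \<in> \<Union>?G" for w
    proof -
      obtain n :: nat where n: "norm (inv T w) < real n" using reals_Archimedean2 by blast
      have e: "T (inv T w) = w" using assms by (simp add: bij_def surj_f_inv_f)
      have "T (inv T w) \<in> T ` ball 0 (real n)" using n by simp
      then have "w \<in> T ` ball 0 (real n)" by (simp only: e)
      then have "w \<in> closure (T ` ball 0 (real n))" by (rule subsetD[OF closure_subset])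
      moreover have "closure (T ` ball 0 (real n)) \<in> ?G" by (rule rangeI)
      ultimately show ?thesis by (rule UnionI[rotated])
    qed
    have "UNIV = \<Union>?G" by (rule UNIV_eq_I) (rule wG)
    then show ?thesis by (rule sym)
  qed
  ultimately show False by simp
qed


lemma bounded_inverse:
  fixes T :: "'a::{real_normed_vector,complete_space} \<Rightarrow> 'a"
  assumes T: "bounded_linear T" and bij: "bij T"
  shows "\<exists>K>0. \<forall>w. norm (inv T w) \<le> K * norm w"
proof -
  have lin: "linear T" using T bounded_linear.linear by blast
  have inj: "inj T" using bij bij_def by blast
  obtain n :: nat where n: "interior (closure (T ` ball 0 (real n))) \<noteq> {}"
    using baire_step[OF bij] by blast
  then obtain y where y: "y \<in> interior (closure (T ` ball 0 (real n)))" by blast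
  then obtain \<rho> where rho: "\<rho> > 0" "ball y \<rho> \<subseteq> interior (closure (T ` ball 0 (real n)))"
    using open_contains_ball open_interior by blast
  then have rho': "ball y \<rho> \<subseteq> closure (T ` ball 0 (real n))" using interior_subset by blast
  have "n > 0"
  proof (rule ccontr)
    assume "\<not> n > 0" then have "closure (T ` ball 0 (real n)) = {}" by simp
    then show False using rho' rho(1) by auto
  qed
  define r where "r = \<rho> / (2 * real n)"
  have r0: "r > 0" unfolding r_def using rho(1) \<open>n > 0\<close> by simp
  have step2: "\<exists>u. norm u < 1 \<and> norm (w - T u) < \<epsilon>" if w: "norm w < r" and eps: "\<epsilon> > 0" for w \<epsilon>
  proof -
    define w' where "w' = (2 * real n) *\<^sub>R w"
    have "norm w' < \<rho>" using w \<open>n > 0\<close> unfolding w'_def r_def by (simp add: field_simps)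
    then have "y + w' \<in> ball y \<rho>" "y \<in> ball y \<rho>" using rho(1) by (auto simp: dist_norm)
    then have c1: "y + w' \<in> closure (T ` ball 0 (real n))" and c2: "y \<in> closure (T ` ball 0 (real n))"
      using rho' by auto
    have en: "\<epsilon> * real n > 0" using eps \<open>n > 0\<close> by simp
    obtain a where a: "a \<in> T ` ball 0 (real n)" "dist a (y + w') < \<epsilon> * real n"
      using c1 en closure_approachable by blast
    obtain b where b: "b \<in> T ` ball 0 (real n)" "dist b y < \<epsilon> * real n"
      using c2 en closure_approachable by blast
    obtain u1 where u1: "norm u1 < real n" "a = T u1" using a(1) by auto
    obtain u2 where u2: "norm u2 < real n" "b = T u2" using b(1) by auto
    define u where "u = (1 / (2 * real n)) *\<^sub>R (u1 - u2)"
    have "norm (u1 - u2) < 2 * real n" using u1 u2 norm_triangle_ineq4[of u1 u2] by linarith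
    moreover have "norm u = norm (u1 - u2) / (2 * real n)" unfolding u_def norm_scaleR using \<open>n > 0\<close> by simp
    ultimately have nu: "norm u < 1" using \<open>n > 0\<close> by (simp add: divide_less_eq)
    have "w - T u = (1 / (2 * real n)) *\<^sub>R ((y + w' - T u1) - (y - T u2))"
      unfolding u_def w'_def using \<open>n > 0\<close>
      by (simp add: linear_scale[OF lin] linear_diff[OF lin] algebra_simps)
    then have "norm (w - T u) = (1 / (2 * real n)) * norm ((y + w' - T u1) - (y - T u2))"
      by simp
    also have "\<dots> \<le> (1 / (2 * real n)) * (norm (y + w' - T u1) + norm (y - T u2))"
      using \<open>n > 0\<close> by (intro mult_left_mono norm_triangle_ineq4) auto
    also have "\<dots> < (1 / (2 * real n)) * (\<epsilon> * real n + \<epsilon> * real n)"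
    proof -
      have "norm (y + w' - T u1) < \<epsilon> * real n" using a(2) u1(2) by (simp add: dist_norm norm_minus_commute)
      moreover have "norm (y - T u2) < \<epsilon> * real n" using b(2) u2(2) by (simp add: dist_norm norm_minus_commute)
      ultimately show ?thesis using \<open>n > 0\<close> by (intro mult_strict_left_mono) auto
    qed
    also have "\<dots> = \<epsilon>" using \<open>n > 0\<close> by simp
    finally show ?thesis using nu by blast
  qed
  define c where "c = 2 / r"
  have c0: "c > 0" unfolding c_def using r0 by simp
  have step3: "\<exists>u. norm u \<le> c * norm w \<and> norm (w - T u) \<le> norm w / 2" for w
  proof (cases "w = 0")
    case True then show ?thesis by (intro exI[of _ 0]) (simp add: linear_0[OF lin])
  next
    case False
    then have nw: "norm w > 0" by simp
    define w' where "w' = (r / (2 * norm w)) *\<^sub>R w"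
    have "norm w' = r / 2" unfolding w'_def using nw r0 by simp
    then have "norm w' < r" using r0 by simp
    then obtain u' where u': "norm u' < 1" "norm (w' - T u') < r / 4"
      using step2[of w' "r/4"] r0 by auto
    define u where "u = (2 * norm w / r) *\<^sub>R u'"
    have "norm u = (2 * norm w / r) * norm u'" unfolding u_def using nw r0 by simp
    also have "\<dots> \<le> (2 * norm w / r) * 1" by (rule mult_left_mono) (use u'(1) nw r0 in auto)
    finally have 1: "norm u \<le> c * norm w" unfolding c_def by simp
    have "w - T u = (2 * norm w / r) *\<^sub>R (w' - T u')"
      unfolding u_def w'_def using nw r0 by (simp add: linear_scale[OF lin] algebra_simps)
    then have "norm (w - T u) = (2 * norm w / r) * norm (w' - T u')" using nw r0 by simp
    also have "\<dots> \<le> (2 * norm w / r) * (r / 4)" by (rule mult_left_mono) (use u'(2) nw r0 in auto)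
    also have "\<dots> = norm w / 2" using r0 by simp
    finally show ?thesis using 1 by blast
  qed
  then have "\<forall>w. \<exists>u. norm u \<le> c * norm w \<and> norm (w - T u) \<le> norm w / 2" by blast
  then have "\<exists>g. \<forall>w. norm (g w) \<le> c * norm w \<and> norm (w - T (g w)) \<le> norm w / 2" by (rule choice)
  then obtain g where g: "\<And>w. norm (g w) \<le> c * norm w" "\<And>w. norm (w - T (g w)) \<le> norm w / 2"
    by blast
  have main: "norm (inv T w) \<le> (2 * c) * norm w" for w
  proof -
    define res where "res = rec_nat w (\<lambda>_ r. r - T (g r))"
    have res0: "res 0 = w" and resS: "\<And>k. res (Suc k) = res k - T (g (res k))"
      unfolding res_def by simp_all
    define u where "u k = g (res k)" for k
    have nres: "norm (res k) \<le> norm w * (1/2)^k" for k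
    proof (induction k)
      case 0 then show ?case by (simp add: res0)
    next
      case (Suc k)
      have "norm (res (Suc k)) \<le> norm (res k) / 2" using g(2)[of "res k"] by (simp add: resS)
      also have "\<dots> \<le> norm w * (1/2)^k / 2" using Suc by simp
      finally show ?case by simp
    qed
    have nu: "norm (u k) \<le> c * norm w * (1/2)^k" for k
    proof -
      have "norm (u k) \<le> c * norm (res k)" unfolding u_def by (rule g(1))
      also have "\<dots> \<le> c * (norm w * (1/2)^k)" by (rule mult_left_mono) (use nres[of k] c0 in auto)
      finally show ?thesis by simp
    qed
    have tele: "(\<Sum>k<m. T (u k)) = w - res m" for m
      by (induction m) (simp_all add: res0 resS u_def)
    have sg: "summable (\<lambda>k. c * norm w * (1/2::real)^k)"
      by (intro summable_mult summable_geometric) simp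
    have sn: "summable (\<lambda>k. norm (u k))"
      by (rule summable_comparison_test'[OF sg]) (use nu in simp)
    have su: "summable u" by (rule summable_norm_c[OF sn])
    then have "u sums (suminf u)" by (rule summable_sums)
    then have "(\<lambda>k. T (u k)) sums T (suminf u)" by (rule bounded_linear.sums[OF T])
    then have l1: "(\<lambda>m. w - res m) \<longlonglongrightarrow> T (suminf u)" unfolding sums_def tele .
    have "res \<longlonglongrightarrow> 0"
    proof (rule Lim_null_comparison)
      show "\<forall>\<^sub>F k in sequentially. norm (res k) \<le> norm w * (1/2)^k" using nres by simp
      show "(\<lambda>k. norm w * (1/2::real)^k) \<longlonglongrightarrow> 0"
        by (rule tendsto_mult_right_zero) (rule LIMSEQ_realpow_zero, simp_all)
    qed
    then have l2: "(\<lambda>m. w - res m) \<longlonglongrightarrow> w - 0" by (intro tendsto_diff tendsto_const)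
    have Tu: "T (suminf u) = w" using LIMSEQ_unique[OF l1 l2] by simp
    have "inv T w = suminf u" using inv_f_eq[OF inj Tu] .
    moreover have "norm (suminf u) \<le> 2 * c * norm w"
    proof -
      have "(\<lambda>m. norm (\<Sum>k<m. u k)) \<longlonglongrightarrow> norm (suminf u)"
        using summable_LIMSEQ[OF su] by (rule tendsto_norm)
      moreover have "norm (\<Sum>k<m. u k) \<le> 2 * c * norm w" for m
      proof -
        have "norm (\<Sum>k<m. u k) \<le> (\<Sum>k<m. norm (u k))" by (rule norm_sum)
        also have "\<dots> \<le> (\<Sum>k<m. c * norm w * (1/2)^k)" by (rule sum_mono) (rule nu)
        also have "\<dots> = c * norm w * (2 - 2 * (1/2)^m)"
          by (simp add: sum_distrib_left[symmetric] geom_half_sum)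
        also have "\<dots> \<le> c * norm w * 2" by (rule mult_left_mono) (use c0 in auto)
        finally show ?thesis by simp
      qed
      ultimately show ?thesis by (intro LIMSEQ_le_const2) auto
    qed
    ultimately show ?thesis by simp
  qed
  show ?thesis using main c0 by (intro exI[of _ "2*c"]) auto
qed



lemma sq_abs_diff:
  fixes a b :: real
  assumes "\<bar>a - b\<bar> < \<bar>a\<bar>"
  shows "(\<bar>a\<bar> - \<bar>b\<bar>)\<^sup>2 = (a - b)\<^sup>2"
proof -
  have "\<bar>a\<bar> - \<bar>b\<bar> = a - b \<or> \<bar>a\<bar> - \<bar>b\<bar> = -(a - b)"
    using assms by (auto simp: abs_if split: if_splits)
  then show ?thesis by (metis power2_minus)
qed

lemma inv_linear:
  fixes T :: "'a::real_vector \<Rightarrow> 'b::real_vector"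
  assumes "linear T" "bij T"
  shows "inv T (a + b) = inv T a + inv T b" "inv T (r *\<^sub>R a) = r *\<^sub>R inv T a"
proof -
  have inj: "inj T" and s: "\<And>w. T (inv T w) = w" using assms(2) by (auto simp: bij_def surj_f_inv_f)
  show "inv T (a + b) = inv T a + inv T b"
    by (rule inv_f_eq[OF inj]) (simp add: linear_add[OF assms(1)] s)
  show "inv T (r *\<^sub>R a) = r *\<^sub>R inv T a"
    by (rule inv_f_eq[OF inj]) (simp add: linear_scale[OF assms(1)] s)
qed

theorem proposition5p1:
  fixes xs :: "nat \<Rightarrow> 'a::{real_inner,complete_space}" and x :: 'a
  assumes "infinite_dimensional TYPE('a)"
    and "riesz_basis xs"
  shows "stable_pr_near xs x \<longleftrightarrow> finite {j. x \<bullet> xs j \<noteq> 0}"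
proof -
  obtain e :: "nat \<Rightarrow> 'a" and T where e: "orthonormal_basis e" and T: "bounded_linear T"
    and bij: "bij T" and Te: "\<And>j. T (e j) = xs j"
    using assms(2) unfolding riesz_basis_def by blast
  have lin: "linear T" using T bounded_linear.linear by blast
  have inj: "inj T" using bij bij_def by blast
  have TS: "\<And>w. T (inv T w) = w" using bij by (auto simp: bij_def surj_f_inv_f)
  have ST: "\<And>w. inv T (T w) = w" using inj by simp
  obtain KS where KS: "KS > 0" "\<And>w. norm (inv T w) \<le> KS * norm w"
    using bounded_inverse[OF T bij] by blast
  have S: "bounded_linear (inv T)"
    by (rule bounded_linear_intro[where K=KS])
       (auto simp: inv_linear[OF lin bij] mult.commute KS(2))
  obtain KT where KT: "KT > 0" "\<And>w. norm (T w) \<le> norm w * KT"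
    using bounded_linear.pos_bounded[OF T] by blast
  obtain AT where AT: "\<And>v w. AT v \<bullet> w = v \<bullet> T w" "\<And>v. norm (AT v) \<le> KT * norm v"
    using adjoint_exists[OF e T, of KT] KT by (auto simp: mult.commute)
  obtain AS where AS: "\<And>v w. AS v \<bullet> w = v \<bullet> inv T w" "\<And>v. norm (AS v) \<le> KS * norm v"
    using adjoint_exists[OF e S, of KS] KS by auto
  have coef: "AT y \<bullet> e j = y \<bullet> xs j" for y j using AT(1)[of y "e j"] Te by simp
  have pars: "(\<lambda>j. (y \<bullet> xs j)\<^sup>2) sums (norm (AT y))\<^sup>2" for y
    using parseval[OF e, of "AT y"] by (simp add: coef)
  have lower: "norm y \<le> KS * norm (AT y)" for y
  proof -
    have "(norm y)\<^sup>2 = y \<bullet> T (inv T y)" by (simp add: TS power2_norm_eq_inner)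
    also have "\<dots> = AT y \<bullet> inv T y" by (simp add: AT(1))
    also have "\<dots> \<le> norm (AT y) * norm (inv T y)" by (rule norm_cauchy_schwarz)
    also have "\<dots> \<le> norm (AT y) * (KS * norm y)" by (rule mult_left_mono) (use KS(2) in auto)
    finally have *: "norm y * norm y \<le> (KS * norm (AT y)) * norm y" by (simp add: power2_eq_square algebra_simps)
    show ?thesis
    proof (cases "norm y = 0")
      case True then show ?thesis using KS(1) by simp
    next
      case False then have "norm y > 0" by simp
      with * show ?thesis by (rule mult_right_le_imp_le)
    qed
  qed
  define z where "z j = AS (e j)" for j
  have zx: "z j \<bullet> xs i = (if j = i then 1 else 0)" for i j
    unfolding z_def using AS(1)[of "e j" "xs i"] by (simp add: Te[symmetric] ST on_inner[OF e])
  have nz: "norm (z j) \<le> KS" for j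
    unfolding z_def using AS(2)[of "e j"] on_inner[OF e, of j j] by (simp add: norm_eq_sqrt_inner)
  define a where "a j = x \<bullet> xs j" for j
  show ?thesis
  proof
    assume "stable_pr_near xs x"
    then obtain C where C: "C > 0" "Liminf (at x within - {x, - x}) (\<lambda>y. ereal (C * Psi xs x y)) \<ge> 1"
      unfolding stable_pr_near_def C_stable_pr_near_def by blast
    have "eventually (\<lambda>y. ereal (1/2) < ereal (C * Psi xs x y)) (at x within - {x, - x})"
    proof -
      have "\<forall>y<1. eventually (\<lambda>w. y < ereal (C * Psi xs x w)) (at x within - {x, - x})"
        using C(2) unfolding le_Liminf_iff .
      then show ?thesis by (rule allE[where x="ereal (1/2)"]) (simp add: one_ereal_def)
    qed
    then obtain d where d: "d > 0"
      "\<And>y. y \<in> - {x, - x} \<Longrightarrow> y \<noteq> x \<Longrightarrow> dist y x < d \<Longrightarrow> 1/2 < C * Psi xs x y"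
      unfolding eventually_at by auto
    show "finite {j. x \<bullet> xs j \<noteq> 0}"
    proof (rule ccontr)
      assume inf: "infinite {j. x \<bullet> xs j \<noteq> 0}"
      have "(\<lambda>j. (a j)\<^sup>2) \<longlonglongrightarrow> 0"
        using pars[of x] unfolding a_def by (intro summable_LIMSEQ_zero) (auto simp: sums_iff)
      then have "(\<lambda>j. sqrt ((a j)\<^sup>2)) \<longlonglongrightarrow> sqrt 0" by (rule tendsto_real_sqrt)
      then have "(\<lambda>j. \<bar>a j\<bar>) \<longlonglongrightarrow> 0" by simp
      moreover have "d / (2 * KS) > 0" using d(1) KS(1) by simp
      ultimately have "eventually (\<lambda>j. \<bar>a j\<bar> < d / (2 * KS)) sequentially"
        by (rule order_tendstoD(2))
      then obtain N where N: "\<And>j. j \<ge> N \<Longrightarrow> \<bar>a j\<bar> < d / (2 * KS)"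
        unfolding eventually_sequentially by blast
      obtain j where j: "j \<ge> N" "a j \<noteq> 0"
        using inf unfolding infinite_nat_iff_unbounded_le a_def by blast
      obtain i where i: "i \<noteq> j" "a i \<noteq> 0"
        using inf unfolding infinite_nat_iff_unbounded_le a_def
        by (metis (mono_tags, lifting) Suc_n_not_le_n mem_Collect_eq)
      define y where "y = x - (2 * a j) *\<^sub>R z j"
      have yx: "y \<bullet> xs k = (if k = j then - a j else a k)" for k
        unfolding y_def by (simp add: inner_diff_left zx a_def)
      have yabs: "\<bar>y \<bullet> xs k\<bar> = \<bar>x \<bullet> xs k\<bar>" for k
        using yx[of k] unfolding a_def by simp
      have "abs_analysis_dist xs x y = 0"
        unfolding abs_analysis_dist_def by (simp add: yabs)
      then have P0: "Psi xs x y = 0" unfolding Psi_def by simp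
      have "z j \<bullet> xs j = 1" using zx by simp
      then have "z j \<noteq> 0" by auto
      then have "y \<noteq> x" unfolding y_def using j(2) by simp
      moreover have "y \<noteq> - x"
      proof
        assume "y = - x"
        then have "y \<bullet> xs i = - a i" unfolding a_def by simp
        moreover have "y \<bullet> xs i = a i" using yx[of i] i(1) by simp
        ultimately show False using i(2) by simp
      qed
      moreover have "dist y x < d"
      proof -
        have "dist y x = norm ((2 * a j) *\<^sub>R z j)" unfolding y_def dist_norm by simp
        also have "\<dots> = 2 * \<bar>a j\<bar> * norm (z j)" by (simp add: abs_mult)
        also have "\<dots> \<le> 2 * \<bar>a j\<bar> * KS" by (rule mult_left_mono) (use nz in auto)
        also have "\<dots> < 2 * (d / (2 * KS)) * KS" using N[OF j(1)] KS(1) by (simp add: less_divide_eq algebra_simps)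
        also have "\<dots> = d" using KS(1) by simp
        finally show ?thesis .
      qed
      ultimately have "1/2 < C * Psi xs x y" using d(2) by blast
      then show False using P0 by simp
    qed
  next
    assume fin: "finite {j. x \<bullet> xs j \<noteq> 0}"
    define F where "F = {j. x \<bullet> xs j \<noteq> 0}"
    let ?W = "at x within - {x, - x}"
    have ev1: "\<forall>j\<in>F. eventually (\<lambda>y. dist (y \<bullet> xs j) (x \<bullet> xs j) < \<bar>x \<bullet> xs j\<bar>) ?W"
    proof
      fix j assume "j \<in> F"
      then have "\<bar>x \<bullet> xs j\<bar> > 0" unfolding F_def by simp
      moreover have "((\<lambda>y. y \<bullet> xs j) \<longlongrightarrow> x \<bullet> xs j) ?W"
        by (intro tendsto_inner tendsto_ident_at tendsto_const)
      ultimately show "eventually (\<lambda>y. dist (y \<bullet> xs j) (x \<bullet> xs j) < \<bar>x \<bullet> xs j\<bar>) ?W"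
        using tendstoD by blast
    qed
    have ev2: "eventually (\<lambda>y. y \<noteq> x \<and> y \<noteq> - x) ?W"
      unfolding eventually_at by (intro exI[of _ 1]) auto
    have "eventually (\<lambda>y. 1 \<le> KS * Psi xs x y) ?W"
      using eventually_conj[OF eventually_ball_finite[OF fin[folded F_def] ev1] ev2]
    proof (rule eventually_mono)
      fix y assume yy: "(\<forall>j\<in>F. dist (y \<bullet> xs j) (x \<bullet> xs j) < \<bar>x \<bullet> xs j\<bar>) \<and> y \<noteq> x \<and> y \<noteq> - x"
      have tm: "(\<bar>x \<bullet> xs j\<bar> - \<bar>y \<bullet> xs j\<bar>)\<^sup>2 = ((x - y) \<bullet> xs j)\<^sup>2" for j
      proof (cases "j \<in> F")
        case True
        then have "\<bar>x \<bullet> xs j - y \<bullet> xs j\<bar> < \<bar>x \<bullet> xs j\<bar>"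
          using yy by (simp add: dist_real_def abs_minus_commute)
        then show ?thesis by (simp add: sq_abs_diff inner_diff_left)
      next
        case False
        then have "x \<bullet> xs j = 0" unfolding F_def by simp
        then show ?thesis by (simp add: inner_diff_left)
      qed
      have "abs_analysis_dist xs x y = sqrt ((norm (AT (x - y)))\<^sup>2)"
        unfolding abs_analysis_dist_def tm using pars[of "x - y"] by (simp add: sums_iff)
      then have ad: "abs_analysis_dist xs x y = norm (AT (x - y))" by simp
      have m0: "min (norm (x - y)) (norm (x + y)) > 0"
        using yy by (auto simp: add_eq_0_iff)
      have m1: "min (norm (x - y)) (norm (x + y)) \<le> norm (x - y)" by simp
      have "norm (x - y) \<le> KS * abs_analysis_dist xs x y" using lower[of "x - y"] ad by simp
      then have "min (norm (x - y)) (norm (x + y)) \<le> KS * abs_analysis_dist xs x y" using m1 by linarith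
      then show "1 \<le> KS * Psi xs x y"
        unfolding Psi_def using m0 by (simp add: le_divide_eq)
    qed
    then have "Liminf ?W (\<lambda>y. ereal (KS * Psi xs x y)) \<ge> 1"
      unfolding le_Liminf_iff
      by (auto elim!: eventually_mono simp: one_ereal_def intro: order_less_le_trans)
    then show "stable_pr_near xs x"
      unfolding stable_pr_near_def C_stable_pr_near_def using KS(1) by blast
  qed
qed


end
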